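(* Let $n\ge 1$ be an integer, $a>0$, and let $a_0,\dots,a_{n-1}:((-a,a)\setminus\{0\})\times\mathbb{K}\to\mathbb{K}$ be arbitrary functions, where $\mathbb{K}=\mathbb{R}$ or $\mathbb{C}$. Let $f\in C^\infty(-a,a)$ be a solution of $$f^{(n)}(x)+a_{n-1}(x,f(x))f^{(n-1)}(x)+\cdots+a_0(x,f(x))f(x)=0,\qquad x\in(-a,a)\setminus\{0\},$$ satisfying $f(0)=f'(0)=\cdots=f^{(n-1)}(0)=0$. Let $B_n=\sum_{k=0}^{n-1}\frac{1}{k!}$ and suppose $$\limsup_{x\to 0}|x|^{n-k}\,|a_k(x,f(x))|< \frac{1}{B_n},\qquad k=0,1,\dots,n-1.$$ Then there exists $\delta>0$ such that $f\equiv 0$ on $[-\delta,\delta]$.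
   Context: The coefficients may be singular at $x=0$; the equation is only required to hold for $x\neq 0$. *)

theory Defs
  imports "HOL-Analysis.Analysis" "HOL-Library.Liminf_Limsup"
begin

fun nth_vderiv :: "nat \<Rightarrow> (real \<Rightarrow> 'a::real_normed_vector) \<Rightarrow> real \<Rightarrow> 'a" where
  "nth_vderiv 0 f = f"
| "nth_vderiv (Suc k) f = (\<lambda>x. vector_derivative (nth_vderiv k f) (at x))"

definition smooth_on :: "real set \<Rightarrow> (real \<Rightarrow> 'a::real_normed_vector) \<Rightarrow> bool" where
  "smooth_on S f \<longleftrightarrow> (\<forall>k. \<forall>x\<in>S. nth_vderiv k f differentiable (at x))"

end

theory Submission
  imports Defs
begin

lemma sum_fact_bound:
  "(\<Sum>k<n. 1 / fact (n - k) :: real) \<le> (\<Sum>j<n. 1 / fact j)"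
proof -
  have "(\<Sum>k<n. 1 / fact (n - k) :: real) = (\<Sum>i<n. 1 / fact (n - Suc i + 1))"
  proof (intro sum.cong refl)
    fix i assume "i \<in> {..<n}"
    then have e: "n - Suc i + 1 = n - i" by auto
    show "1 / fact (n - i) = (1 / fact (n - Suc i + 1) :: real)" by (simp only: e)
  qed
  also have "\<dots> = (\<Sum>i<n. 1 / fact (i + 1))"
    using sum.nat_diff_reindex[of "\<lambda>i. 1 / (fact (i+1) :: real)" n] by simp
  also have "\<dots> \<le> (\<Sum>j<n. 1 / fact j)"
    by (rule sum_mono) (auto simp: divide_simps fact_mono)
  finally show ?thesis .
qed

lemma taylor_step:
  fixes g :: "real \<Rightarrow> 'a::real_normed_vector"
  assumes d: "\<And>t. \<bar>t\<bar> \<le> \<delta> \<Longrightarrow> (g has_vector_derivative g' t) (at t)"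
    and g0: "g 0 = 0"
    and bnd: "\<And>t. \<bar>t\<bar> \<le> \<delta> \<Longrightarrow> norm (g' t) \<le> M * \<bar>t\<bar> ^ j / fact j"
    and x: "\<bar>x\<bar> \<le> \<delta>"
  shows "norm (g x) \<le> M * \<bar>x\<bar> ^ Suc j / fact (Suc j)"
proof -
  have cont: "continuous_on {u..v} g" if "\<bar>u\<bar> \<le> \<delta>" "\<bar>v\<bar> \<le> \<delta>" for u v
  proof (intro continuous_at_imp_continuous_on ballI)
    fix y assume "y \<in> {u..v}"
    then have "(g has_vector_derivative g' y) (at y)" using that d by auto
    then show "isCont g y" by (rule has_vector_derivative_continuous)
  qed
  consider "x = 0" | "x > 0" | "x < 0" by linarith
  then show ?thesis
  proof cases
    case 1 then show ?thesis using g0 by simp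
  next
    case 2
    have "norm (g x - g 0) \<le> M * x ^ Suc j / fact (Suc j) - M * 0 ^ Suc j / fact (Suc j)"
    proof (rule differentiable_bound_general[where f'=g' and \<phi>'="\<lambda>t. M * t ^ j / fact j"])
      show "0 < x" by fact
      show "continuous_on {0..x} g" using cont x 2 by simp
      show "continuous_on {0..x} (\<lambda>t. M * t ^ Suc j / fact (Suc j))"
        by (intro continuous_intros) auto
      fix t assume t: "0 < t" "t < x"
      show "(g has_vector_derivative g' t) (at t)" using d t x by auto
      show "norm (g' t) \<le> M * t ^ j / fact j" using bnd[of t] t x by auto
      have "((\<lambda>t. M * t ^ Suc j / fact (Suc j)) has_real_derivative
              M * (real (Suc j) * t ^ j) / fact (Suc j)) (at t)"
        using DERIV_pow[of "Suc j" t] by (intro DERIV_cdivide DERIV_cmult) simp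
      moreover have "M * (real (Suc j) * t ^ j) / fact (Suc j) = M * t ^ j / fact j"
        by (simp add: fact_Suc divide_simps)
      ultimately show "((\<lambda>t. M * t ^ Suc j / fact (Suc j)) has_vector_derivative M * t ^ j / fact j) (at t)"
        by (simp add: has_real_derivative_iff_has_vector_derivative)
    qed
    then show ?thesis using g0 2 by simp
  next
    case 3
    have "norm (g 0 - g x) \<le> (- M * (- 0) ^ Suc j / fact (Suc j)) - (- M * (- x) ^ Suc j / fact (Suc j))"
    proof (rule differentiable_bound_general[where f'=g' and \<phi>'="\<lambda>t. M * (-t) ^ j / fact j"])
      show "x < 0" by fact
      show "continuous_on {x..0} g" using cont x 3 by simp
      show "continuous_on {x..0} (\<lambda>t. - M * (-t) ^ Suc j / fact (Suc j))"
        by (intro continuous_intros) auto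
      fix t assume t: "x < t" "t < 0"
      show "(g has_vector_derivative g' t) (at t)" using d t x by auto
      show "norm (g' t) \<le> M * (-t) ^ j / fact j" using bnd[of t] t x by auto
      have "((\<lambda>t. - M * (-t) ^ Suc j / fact (Suc j)) has_real_derivative
              - M * (real (Suc j) * (-t) ^ j * (-1)) / fact (Suc j)) (at t)"
      proof -
        have "((\<lambda>t. (-t) ^ Suc j) has_real_derivative (real (Suc j) * (-t) ^ j * (-1))) (at t)"
          using DERIV_chain2[OF DERIV_pow[of "Suc j" "-t"] DERIV_minus[OF DERIV_ident, of t]] by simp
        then show ?thesis by (intro DERIV_cdivide DERIV_cmult) 
      qed
      moreover have "- M * (real (Suc j) * (-t) ^ j * (-1)) / fact (Suc j) = M * (-t) ^ j / fact j"
        by (simp add: fact_Suc divide_simps)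
      ultimately show "((\<lambda>t. - M * (-t) ^ Suc j / fact (Suc j)) has_vector_derivative M * (-t) ^ j / fact j) (at t)"
        by (simp add: has_real_derivative_iff_has_vector_derivative)
    qed
    then show ?thesis using g0 3 by (simp add: norm_minus_commute)
  qed
qed


lemma main_generic:
  fixes f :: "real \<Rightarrow> 'a::real_normed_field" and A :: "nat \<Rightarrow> real \<Rightarrow> 'a \<Rightarrow> 'a"
    and n :: nat and a :: real
  assumes n: "n \<ge> 1" and a: "a > 0"
    and sm: "smooth_on {-a<..<a} f"
    and eq: "\<forall>x\<in>{-a<..<a} - {0}. nth_vderiv n f x + (\<Sum>k<n. A k x (f x) * nth_vderiv k f x) = 0"
    and init: "\<forall>k<n. nth_vderiv k f 0 = 0"
    and ls: "\<forall>k<n. Limsup (at 0) (\<lambda>x. ereal (\<bar>x\<bar> ^ (n - k) * norm (A k x (f x))))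
               < ereal (1 / (\<Sum>j<n. 1 / fact j))"
  shows "\<exists>\<delta>>0. \<delta> < a \<and> (\<forall>x\<in>{-\<delta>..\<delta>}. f x = 0)"
proof -
  define D where "D k = nth_vderiv k f" for k
  define B :: real where "B = (\<Sum>j<n. 1 / fact j)"
  have "1 / fact 0 \<le> B" unfolding B_def
    by (rule member_le_sum) (use n in auto)
  then have B1: "B \<ge> 1" by simp
  have deriv: "(D k has_vector_derivative D (Suc k) x) (at x)" if "x \<in> {-a<..<a}" for k x
  proof -
    have "nth_vderiv k f differentiable (at x)" using sm that by (auto simp: smooth_on_def)
    from vector_derivative_works[THEN iffD1, OF this] show ?thesis by (simp add: D_def)
  qed
  define Ls where "Ls k = Limsup (at 0) (\<lambda>x. ereal (\<bar>x\<bar> ^ (n - k) * norm (A k x (f x))))" for k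
  define L where "L = Max (Ls ` {..<n})"
  have "Ls 0 \<in> Ls ` {..<n}" using n by auto
  then have ne: "Ls ` {..<n} \<noteq> {}" by blast
  have "L < ereal (1/B)" unfolding L_def using ne ls by (auto simp: Ls_def B_def)
  then obtain c where Lc: "L < ereal c" and cr: "ereal c < ereal (1/B)"
    using ereal_dense2 by blast
  have ev: "eventually (\<lambda>x. \<forall>k\<in>{..<n}. \<bar>x\<bar> ^ (n - k) * norm (A k x (f x)) < c) (at 0)"
  proof (rule eventually_ball_finite[OF finite_lessThan], intro ballI)
    fix k assume k: "k \<in> {..<n}"
    have "Ls k \<le> L" unfolding L_def using k by auto
    with Lc have "Ls k < ereal c" by auto
    from Limsup_lessD[OF this[unfolded Ls_def]]
    show "eventually (\<lambda>x. \<bar>x\<bar> ^ (n - k) * norm (A k x (f x)) < c) (at 0)" by simp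
  qed
  then obtain d where d: "d > 0"
    and dP: "\<And>x. x \<noteq> 0 \<Longrightarrow> \<bar>x\<bar> < d \<Longrightarrow> \<forall>k\<in>{..<n}. \<bar>x\<bar> ^ (n - k) * norm (A k x (f x)) < c"
    unfolding eventually_at by (auto simp: dist_real_def)
  define \<delta> where "\<delta> = min (d/2) (a/2)"
  have \<delta>: "\<delta> > 0" "\<delta> < a" "\<delta> < d" using d a by (auto simp: \<delta>_def)
  define c' where "c' = max c 0"
  have c'0: "c' \<ge> 0" by (simp add: c'_def)
  have "c' < 1 / B" using cr B1 by (auto simp: c'_def)
  then have c'B: "c' * B < 1" using B1 by (simp add: field_simps)
  define S where "S = (\<Sum>k<n. 1 / fact (n - k) :: real)"
  define q where "q = c' * S"
  have "S \<le> B" unfolding S_def B_def by (rule sum_fact_bound)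
  then have q1: "q < 1" unfolding q_def using c'0 c'B
    by (meson le_less_trans mult_left_mono)
  have sub: "\<And>x. x \<in> {-\<delta>..\<delta>} \<Longrightarrow> x \<in> {-a<..<a}" using \<delta> by auto
  have contn: "isCont (D n) x" if "x \<in> {-\<delta>..\<delta>}" for x
    using deriv[OF sub[OF that]] by (rule has_vector_derivative_continuous)
  have "continuous_on {-\<delta>..\<delta>} (\<lambda>x. norm (D n x))"
    using contn by (intro continuous_at_imp_continuous_on ballI continuous_intros) auto
  then obtain x0 where x0: "x0 \<in> {-\<delta>..\<delta>}" and x0m: "\<And>y. y \<in> {-\<delta>..\<delta>} \<Longrightarrow> norm (D n y) \<le> norm (D n x0)"
    using continuous_attains_sup[of "{-\<delta>..\<delta>}" "\<lambda>x. norm (D n x)"] \<delta> by auto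
  define M where "M = norm (D n x0)"
  have M0: "M \<ge> 0" by (simp add: M_def)
  have tay: "\<forall>x\<in>{-\<delta>..\<delta>}. norm (D (n - j) x) \<le> M * \<bar>x\<bar> ^ j / fact j" if "j \<le> n" for j
    using that
  proof (induction j)
    case 0
    then show ?case using x0m by (simp add: M_def)
  next
    case (Suc j)
    have e: "Suc (n - Suc j) = n - j" using Suc.prems by auto
    show ?case
    proof
      fix x assume x: "x \<in> {-\<delta>..\<delta>}"
      show "norm (D (n - Suc j) x) \<le> M * \<bar>x\<bar> ^ Suc j / fact (Suc j)"
      proof (rule taylor_step[where g' = "D (n - j)" and \<delta> = \<delta>])
        fix t assume t: "\<bar>t\<bar> \<le> \<delta>"
        then have "t \<in> {-a<..<a}" using \<delta> by auto
        from deriv[OF this, of "n - Suc j"]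
        show "(D (n - Suc j) has_vector_derivative D (n - j) t) (at t)" by (simp only: e)
        show "norm (D (n - j) t) \<le> M * \<bar>t\<bar> ^ j / fact j"
        proof -
          have "t \<in> {-\<delta>..\<delta>}" using t by (auto simp: abs_le_iff)
          moreover have "j \<le> n" using Suc.prems by simp
          ultimately show ?thesis using Suc.IH by blast
        qed
      next
        show "D (n - Suc j) 0 = 0" using init Suc.prems by (simp add: D_def)
        show "\<bar>x\<bar> \<le> \<delta>" using x by auto
      qed
    qed
  qed
  have bound_nz: "norm (D n x) \<le> q * M" if x: "x \<in> {-\<delta>..\<delta>}" "x \<noteq> 0" for x
  proof -
    have "D n x = - (\<Sum>k<n. A k x (f x) * D k x)"
      using eq sub[OF x(1)] x(2) by (auto simp: D_def eq_neg_iff_add_eq_0)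
    then have "norm (D n x) \<le> (\<Sum>k<n. norm (A k x (f x) * D k x))"
      by (simp add: norm_sum)
    also have "\<dots> \<le> (\<Sum>k<n. c' * (M / fact (n - k)))"
    proof (rule sum_mono)
      fix k assume k: "k \<in> {..<n}"
      have "norm (D (n - (n - k)) x) \<le> M * \<bar>x\<bar> ^ (n - k) / fact (n - k)"
        using tay[of "n - k"] x by auto
      moreover have "n - (n - k) = k" using k by auto
      ultimately have Dk: "norm (D k x) \<le> M * \<bar>x\<bar> ^ (n - k) / fact (n - k)" by simp
      have Ak: "\<bar>x\<bar> ^ (n - k) * norm (A k x (f x)) \<le> c'"
        using dP[OF x(2)] x \<delta> k by (force simp: c'_def)
      have "norm (A k x (f x) * D k x) = norm (A k x (f x)) * norm (D k x)"
        by (simp add: norm_mult)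
      also have "\<dots> \<le> norm (A k x (f x)) * (M * \<bar>x\<bar> ^ (n - k) / fact (n - k))"
        using Dk by (rule mult_left_mono) simp
      also have "\<dots> = (\<bar>x\<bar> ^ (n - k) * norm (A k x (f x))) * (M / fact (n - k))"
        by (simp add: field_simps)
      also have "\<dots> \<le> c' * (M / fact (n - k))"
        using Ak M0 by (intro mult_right_mono) auto
      finally show "norm (A k x (f x) * D k x) \<le> c' * (M / fact (n - k))" .
    qed
    also have "\<dots> = q * M" unfolding q_def S_def
      by (simp add: sum_distrib_left sum_distrib_right)
    finally show ?thesis .
  qed
  have "M \<le> q * M"
  proof (cases "x0 = 0")
    case False
    then show ?thesis using bound_nz[OF x0] by (simp add: M_def)
  next
    case True
    have lim: "((\<lambda>x. norm (D n x)) \<longlongrightarrow> norm (D n 0)) (at 0)"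
      using contn[of 0] \<delta> by (intro tendsto_intros) (auto simp: isCont_def)
    have "eventually (\<lambda>x. norm (D n x) \<le> q * M) (at 0)"
      unfolding eventually_at using \<delta>
      by (intro exI[of _ \<delta>]) (auto intro!: bound_nz simp: dist_real_def)
    from tendsto_upperbound[OF lim this] show ?thesis using True by (simp add: M_def)
  qed
  then have "(1 - q) * M \<le> 0" by (simp add: algebra_simps)
  moreover have "1 - q > 0" using q1 by simp
  ultimately have "M \<le> 0" by (simp add: mult_le_0_iff)
  then have M00: "M = 0" using M0 by simp
  show ?thesis
  proof (intro exI[of _ \<delta>] conjI ballI)
    fix x assume x: "x \<in> {-\<delta>..\<delta>}"
    from tay[of n] x have "norm (D 0 x) \<le> 0" by (simp add: M00)
    then show "f x = 0" by (simp add: D_def)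
  qed (use \<delta> in auto)
qed

theorem mainTheorem2:
  fixes n :: nat and a :: real
  assumes "n \<ge> 1" and "a > 0"
  shows
   "(\<forall>(f :: real \<Rightarrow> real) (A :: nat \<Rightarrow> real \<Rightarrow> real \<Rightarrow> real).
       smooth_on {-a<..<a} f
     \<and> (\<forall>x\<in>{-a<..<a} - {0}.
           nth_vderiv n f x + (\<Sum>k<n. A k x (f x) * nth_vderiv k f x) = 0)
     \<and> (\<forall>k<n. nth_vderiv k f 0 = 0)
     \<and> (\<forall>k<n. Limsup (at 0) (\<lambda>x. ereal (\<bar>x\<bar> ^ (n - k) * norm (A k x (f x))))
               < ereal (1 / (\<Sum>j<n. 1 / fact j)))
     \<longrightarrow> (\<exists>\<delta>>0. \<delta> < a \<and> (\<forall>x\<in>{-\<delta>..\<delta>}. f x = 0)))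
  \<and> (\<forall>(f :: real \<Rightarrow> complex) (A :: nat \<Rightarrow> real \<Rightarrow> complex \<Rightarrow> complex).
       smooth_on {-a<..<a} f
     \<and> (\<forall>x\<in>{-a<..<a} - {0}.
           nth_vderiv n f x + (\<Sum>k<n. A k x (f x) * nth_vderiv k f x) = 0)
     \<and> (\<forall>k<n. nth_vderiv k f 0 = 0)
     \<and> (\<forall>k<n. Limsup (at 0) (\<lambda>x. ereal (\<bar>x\<bar> ^ (n - k) * norm (A k x (f x))))
               < ereal (1 / (\<Sum>j<n. 1 / fact j)))
     \<longrightarrow> (\<exists>\<delta>>0. \<delta> < a \<and> (\<forall>x\<in>{-\<delta>..\<delta>}. f x = 0)))"
  by (intro conjI allI impI; elim conjE; rule main_generic[OF assms]; assumption)

end
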